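(* Let $\eta\in(0,1)$, let $\pi$ be a probability vector on $[K]$ with positive entries, let $\ell\in[-1,1]^K$ be fixed, and let $A\sim\pi$. Define $\tilde\ell_i=\ell_i\mathbb{I}(A=i)$, $\lambda_i=\frac{\pi_i\pi_A\ell_A}{\sum_{j}\pi_j^2}$ and $\pi'_i=\pi_i\big(1-\eta(\tilde\ell_i-\lambda_i)\big)$. Then for every probability vector $u$ on $[K]$ with positive entries, $$\langle\pi-u,\ell\rangle+\mathbb{E}\!\left[\eta^{-1}D_{LB}(u,\pi')\right]-\eta^{-1}D_{LB}(u,\pi)\le\frac{2\eta}{1-\eta}.$$
   Context: $D_{LB}$ is the Bregman divergence of the log-barrier $F(x)=-\sum_{i=1}^K\log x_i$: for $x,y$ with positive entries, $D_{LB}(y,x)=\sum_{i=1}^K\left(\frac{y_i}{x_i}-1-\log\frac{y_i}{x_i}\right)$. The expectation is over $A\sim\pi$. (Under these hypotheses $\pi'$ has positive entries and sums to one.) *)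

theory Defs
  imports Complex_Main
begin

text \<open>Index set [K] is modelled by a finite type 'k (K = CARD('k)).\<close>

definition D_LB :: "('k::finite \<Rightarrow> real) \<Rightarrow> ('k \<Rightarrow> real) \<Rightarrow> real" where
  "D_LB y x = (\<Sum>i\<in>UNIV. y i / x i - 1 - ln (y i / x i))"

definition ltilde :: "('k \<Rightarrow> real) \<Rightarrow> 'k \<Rightarrow> 'k \<Rightarrow> real" where
  "ltilde l a i = (if a = i then l i else 0)"

definition lam :: "('k::finite \<Rightarrow> real) \<Rightarrow> ('k \<Rightarrow> real) \<Rightarrow> 'k \<Rightarrow> 'k \<Rightarrow> real" where
  "lam \<pi> l a i = \<pi> i * \<pi> a * l a / (\<Sum>j\<in>UNIV. (\<pi> j)\<^sup>2)"

definition pi_upd :: "real \<Rightarrow> ('k::finite \<Rightarrow> real) \<Rightarrow> ('k \<Rightarrow> real) \<Rightarrow> 'k \<Rightarrow> 'k \<Rightarrow> real" where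
  "pi_upd \<eta> \<pi> l a i = \<pi> i * (1 - \<eta> * (ltilde l a i - lam \<pi> l a i))"

end

theory Submission
  imports Defs
begin

lemma lin_aux: fixes a x y y' z w r :: real
  shows "a = x + y \<Longrightarrow> y \<le> y' \<Longrightarrow> z \<le> -w \<Longrightarrow> r = x + y' - w \<Longrightarrow> a + z \<le> r"
  by linarith

lemma key:
  fixes p v e g h :: real
  assumes "0<p" "0<v" "0<e" "e<1" "\<bar>g\<bar>\<le>1" "g^2 \<le> h"
  shows "v/(p*(1-e*g)) - v/p + ln(1-e*g) \<le> e*((v/p)*(g + e/(1-e)*h) - g)"
proof -
  have "e*g \<le> e*1" using assms by (intro mult_left_mono) auto
  then have d: "1-e*g \<ge> 1-e" by simp
  have pos: "1-e*g > 0" using d assms(4) by linarith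
  have l: "ln(1-e*g) \<le> -(e*g)" using ln_le_minus_one[OF pos] by simp
  have h0: "0 \<le> h" using assms(6) zero_le_power2[of g] by linarith
  have f: "g^2/(1-e*g) \<le> h/(1-e)"
    by (rule frac_le) (use assms d h0 in auto)
  have eq: "v/(p*(1-e*g)) - v/p = (v/p)*(e*g + e^2*(g^2/(1-e*g)))"
    using pos assms(1) by (simp add: field_simps power2_eq_square)
  have "(v/p)*(e^2*(g^2/(1-e*g))) \<le> (v/p)*(e^2*(h/(1-e)))"
    using f assms by (intro mult_left_mono) auto
  moreover have "e*((v/p)*(g + e/(1-e)*h) - g) = (v/p)*(e*g) + (v/p)*(e^2*(h/(1-e))) - e*g"
    by (simp add: algebra_simps power2_eq_square)
  moreover have "(v/p)*(e*g + e^2*(g^2/(1-e*g))) = (v/p)*(e*g) + (v/p)*(e^2*(g^2/(1-e*g)))"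
    by (simp add: distrib_left)
  ultimately show ?thesis using eq l
    using lin_aux[of "v/(p*(1-e*g)) - v/p" "v/p*(e*g)" "v/p*(e^2*(g^2/(1-e*g)))"
        "v/p*(e^2*(h/(1-e)))" "ln(1-e*g)" "e*g" "e*((v/p)*(g + e/(1-e)*h) - g)"]
    by simp
qed

theorem mainTheorem4:
  fixes \<eta> :: real and \<pi> u l :: "'k::finite \<Rightarrow> real"
  assumes "0 < \<eta>" "\<eta> < 1"
    and "\<forall>i. 0 < \<pi> i" "(\<Sum>i\<in>UNIV. \<pi> i) = 1"
    and "\<forall>i. \<bar>l i\<bar> \<le> 1"
    and "\<forall>i. 0 < u i" "(\<Sum>i\<in>UNIV. u i) = 1"
  shows "(\<Sum>i\<in>UNIV. (\<pi> i - u i) * l i)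
           + (\<Sum>a\<in>UNIV. \<pi> a * (D_LB u (pi_upd \<eta> \<pi> l a) / \<eta>))
           - D_LB u \<pi> / \<eta> \<le> 2 * \<eta> / (1 - \<eta>)"
proof -
  note pp = assms(3)[rule_format] and up = assms(6)[rule_format] and lb = assms(5)[rule_format]
  define S where "S = (\<Sum>j\<in>UNIV. (\<pi> j)\<^sup>2)"
  have Spos: "S > 0" unfolding S_def
    using pp by (intro sum_pos) (auto simp: less_le)
  have sq_le: "(\<pi> i)^2 \<le> S" for i unfolding S_def
    by (rule member_le_sum) auto
  have prod_le: "\<pi> i * \<pi> a \<le> S" for i a
  proof (cases "i = a")
    case True then show ?thesis using sq_le[of i] by (simp add: power2_eq_square)
  next
    case False
    have "\<pi> i * \<pi> a \<le> (\<pi> i)^2 + (\<pi> a)^2"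
    proof -
      have "0 \<le> (\<pi> i - \<pi> a)^2" by simp
      then have "2*(\<pi> i * \<pi> a) \<le> (\<pi> i)^2 + (\<pi> a)^2"
        by (simp add: power2_diff)
      moreover have "0 < \<pi> i * \<pi> a" using pp[of i] pp[of a] by simp
      ultimately show ?thesis by linarith
    qed
    also have "\<dots> = (\<Sum>j\<in>{i,a}. (\<pi> j)^2)" using False by simp
    also have "\<dots> \<le> S" unfolding S_def by (rule sum_mono2) auto
    finally show ?thesis .
  qed
  define g where "g a i = ltilde l a i - lam \<pi> l a i" for a i
  define h where "h a i = (if a = i then 1 else 0) + \<pi> i * \<pi> a / S" for a i :: 'k
  have lamabs: "\<bar>lam \<pi> l a i\<bar> \<le> \<pi> i * \<pi> a / S" for a i
  proof -
    have "\<bar>lam \<pi> l a i\<bar> = \<pi> i * \<pi> a * \<bar>l a\<bar> / S"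
      unfolding lam_def S_def[symmetric] using pp[of i] pp[of a] Spos
      by (simp add: abs_mult abs_divide)
    also have "\<dots> \<le> \<pi> i * \<pi> a * 1 / S"
      using pp[of i] pp[of a] Spos lb[of a]
      by (intro divide_right_mono mult_left_mono) auto
    finally show ?thesis by simp
  qed
  have r1: "\<pi> i * \<pi> a / S \<le> 1" for i a using prod_le[of i a] Spos by simp
  have r0: "0 \<le> \<pi> i * \<pi> a / S" for i a using pp[of i] pp[of a] Spos by simp
  have gb: "\<bar>g a i\<bar> \<le> 1 \<and> (g a i)^2 \<le> h a i" for a i
  proof (cases "a = i")
    case True
    have t: "0 \<le> 1 - \<pi> i * \<pi> i / S" "1 - \<pi> i * \<pi> i / S \<le> 1"
      using r1[of i i] r0[of i i] by auto
    have ge: "g a i = l i * (1 - \<pi> i * \<pi> i / S)"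
      unfolding g_def ltilde_def lam_def S_def[symmetric] using True
      by (simp add: algebra_simps power2_eq_square)
    have "\<bar>g a i\<bar> \<le> 1 * 1" unfolding ge abs_mult
      by (rule mult_mono) (use lb[of i] t in auto)
    moreover have "(g a i)^2 \<le> 1"
      using \<open>\<bar>g a i\<bar> \<le> 1*1\<close> by (simp add: abs_le_square_iff[symmetric] abs_square_le_1)
    ultimately show ?thesis using True r0[of i a] unfolding h_def by simp
  next
    case False
    have ge: "g a i = - lam \<pi> l a i" unfolding g_def ltilde_def using False by simp
    have a1: "\<bar>g a i\<bar> \<le> 1" using ge lamabs[of a i] r1[of i a] by simp
    have "(g a i)^2 \<le> \<bar>g a i\<bar>" using a1
      by (simp add: power2_eq_square abs_mult[symmetric])
        (metis abs_ge_zero abs_mult_self_eq mult_left_le_one_le)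
    also have "\<dots> \<le> \<pi> i * \<pi> a / S" using ge lamabs[of a i] by simp
    finally show ?thesis using a1 False unfolding h_def by simp
  qed
  have upd: "pi_upd \<eta> \<pi> l a i = \<pi> i * (1 - \<eta> * g a i)" for a i
    unfolding pi_upd_def g_def by simp
  have opos: "1 - \<eta> * g a i > 0" for a i
  proof -
    have "\<eta> * g a i \<le> \<eta> * 1" using gb[of a i] assms(1)
      by (intro mult_left_mono) auto
    then show ?thesis using assms(2) by simp
  qed
  define T where "T a i = (u i / \<pi> i) * (g a i + \<eta>/(1-\<eta>) * h a i) - g a i" for a i
  have Dd: "D_LB u (pi_upd \<eta> \<pi> l a) - D_LB u \<pi>
      = (\<Sum>i\<in>UNIV. u i/(\<pi> i*(1-\<eta>*g a i)) - u i/\<pi> i + ln(1-\<eta>*g a i))" for a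
    unfolding D_LB_def upd sum_subtractf[symmetric]
  proof (rule sum.cong[OF refl])
    fix i
    have "ln (u i / (\<pi> i * (1 - \<eta> * g a i))) = ln (u i / \<pi> i) - ln (1 - \<eta> * g a i)"
      using pp[of i] up[of i] opos[of a i]
      by (simp add: ln_div ln_mult)
    then show "u i / (\<pi> i * (1 - \<eta> * g a i)) - 1 - ln (u i / (\<pi> i * (1 - \<eta> * g a i))) -
          (u i / \<pi> i - 1 - ln (u i / \<pi> i)) =
          u i / (\<pi> i * (1 - \<eta> * g a i)) - u i / \<pi> i + ln (1 - \<eta> * g a i)" by simp
  qed
  have Db: "D_LB u (pi_upd \<eta> \<pi> l a) / \<eta> \<le> D_LB u \<pi> / \<eta> + (\<Sum>i\<in>UNIV. T a i)" for a
  proof -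
    have "D_LB u (pi_upd \<eta> \<pi> l a) - D_LB u \<pi> \<le> (\<Sum>i\<in>UNIV. \<eta> * T a i)"
      unfolding Dd T_def
      by (rule sum_mono, rule key) (use pp up assms(1,2) gb in auto)
    then have "D_LB u (pi_upd \<eta> \<pi> l a) \<le> D_LB u \<pi> + \<eta> * (\<Sum>i\<in>UNIV. T a i)"
      by (simp add: sum_distrib_left)
    then show ?thesis using assms(1) by (simp add: field_simps)
  qed
  have B: "(\<Sum>a\<in>UNIV. \<pi> a * (D_LB u (pi_upd \<eta> \<pi> l a) / \<eta>))
      \<le> (\<Sum>a\<in>UNIV. \<pi> a * (D_LB u \<pi> / \<eta> + (\<Sum>i\<in>UNIV. T a i)))"
    by (rule sum_mono, rule mult_left_mono) (use Db pp in \<open>auto intro: less_imp_le\<close>)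
  also have "\<dots> = D_LB u \<pi> / \<eta> + (\<Sum>i\<in>UNIV. \<Sum>a\<in>UNIV. \<pi> a * T a i)"
  proof -
    have "(\<Sum>a\<in>UNIV. \<pi> a * (D_LB u \<pi> / \<eta> + (\<Sum>i\<in>UNIV. T a i)))
       = (\<Sum>a\<in>UNIV. \<pi> a) * (D_LB u \<pi> / \<eta>) + (\<Sum>a\<in>UNIV. \<Sum>i\<in>UNIV. \<pi> a * T a i)"
      by (simp only: distrib_left sum.distrib sum_distrib_left sum_distrib_right)
    also have "(\<Sum>a\<in>UNIV. \<Sum>i\<in>UNIV. \<pi> a * T a i) = (\<Sum>i\<in>UNIV. \<Sum>a\<in>UNIV. \<pi> a * T a i)"
      by (rule sum.swap)
    finally show ?thesis using assms(4) by simp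
  qed
  finally have B2: "(\<Sum>a\<in>UNIV. \<pi> a * (D_LB u (pi_upd \<eta> \<pi> l a) / \<eta>))
      \<le> D_LB u \<pi> / \<eta> + (\<Sum>i\<in>UNIV. \<Sum>a\<in>UNIV. \<pi> a * T a i)" .
  define c where "c = (\<Sum>a\<in>UNIV. (\<pi> a)^2 * l a) / S"
  have sg: "(\<Sum>a\<in>UNIV. \<pi> a * g a i) = \<pi> i * (l i - c)" for i
  proof -
    have s1: "(\<Sum>a\<in>UNIV. \<pi> a * ltilde l a i) = \<pi> i * l i"
      unfolding ltilde_def by (simp add: if_distrib[of "\<lambda>x. _ * x"] cong: if_cong)
    have s2: "(\<Sum>a\<in>UNIV. \<pi> a * lam \<pi> l a i) = \<pi> i * c"
      unfolding lam_def c_def S_def[symmetric]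
      by (simp add: sum_divide_distrib[symmetric] sum_distrib_left power2_eq_square
          algebra_simps)
    show ?thesis unfolding g_def using s1 s2
      by (simp add: right_diff_distrib sum_subtractf)
  qed
  have sh: "(\<Sum>a\<in>UNIV. \<pi> a * h a i) = 2 * \<pi> i" for i
  proof -
    have "(\<Sum>a\<in>UNIV. \<pi> a * h a i) = (\<Sum>a\<in>UNIV. \<pi> a * (if a = i then 1 else 0))
         + \<pi> i * ((\<Sum>a\<in>UNIV. (\<pi> a)^2) / S)"
      unfolding h_def by (simp add: distrib_left sum.distrib sum_distrib_left
          sum_divide_distrib power2_eq_square algebra_simps)
    also have "\<dots> = \<pi> i + \<pi> i" using Spos unfolding S_def[symmetric]
      by (simp add: if_distrib[of "\<lambda>x. _ * x"] cong: if_cong)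
    finally show ?thesis by simp
  qed
  have sT: "(\<Sum>a\<in>UNIV. \<pi> a * T a i) = (u i - \<pi> i) * (l i - c) + 2*\<eta>/(1-\<eta>) * u i" for i
  proof -
    have "(\<Sum>a\<in>UNIV. \<pi> a * T a i) = (u i / \<pi> i - 1) * (\<Sum>a\<in>UNIV. \<pi> a * g a i)
        + (u i / \<pi> i) * (\<eta>/(1-\<eta>)) * (\<Sum>a\<in>UNIV. \<pi> a * h a i)"
    proof -
      have "(\<Sum>a\<in>UNIV. \<pi> a * T a i) = (\<Sum>a\<in>UNIV. (u i / \<pi> i - 1) * (\<pi> a * g a i)
        + (u i / \<pi> i) * (\<eta>/(1-\<eta>)) * (\<pi> a * h a i))"
        unfolding T_def by (rule sum.cong) (auto simp: algebra_simps)
      then show ?thesis by (simp only: sum.distrib sum_distrib_left)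
    qed
    also have "\<dots> = (u i - \<pi> i) * (l i - c) + 2*\<eta>/(1-\<eta>) * u i"
    proof -
      have "1 - \<eta> \<noteq> 0" using assms(2) by simp
      then show ?thesis unfolding sg sh using pp[of i] by (simp add: field_simps)
    qed
    finally show ?thesis .
  qed
  have "(\<Sum>i\<in>UNIV. \<Sum>a\<in>UNIV. \<pi> a * T a i)
      = (\<Sum>i\<in>UNIV. (u i - \<pi> i) * l i) - c * ((\<Sum>i\<in>UNIV. u i) - (\<Sum>i\<in>UNIV. \<pi> i))
        + 2*\<eta>/(1-\<eta>) * (\<Sum>i\<in>UNIV. u i)"
  proof -
    have "(\<Sum>i\<in>UNIV. \<Sum>a\<in>UNIV. \<pi> a * T a i) = (\<Sum>i\<in>UNIV. ((u i - \<pi> i) * l i - c * u i + c * \<pi> i)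
        + 2*\<eta>/(1-\<eta>) * u i)"
      unfolding sT by (rule sum.cong) (auto simp: algebra_simps)
    also have "\<dots> = (\<Sum>i\<in>UNIV. (u i - \<pi> i) * l i) - c * (\<Sum>i\<in>UNIV. u i) + c * (\<Sum>i\<in>UNIV. \<pi> i)
        + 2*\<eta>/(1-\<eta>) * (\<Sum>i\<in>UNIV. u i)"
      by (simp only: sum.distrib sum_subtractf sum_distrib_left)
    finally show ?thesis by (simp add: algebra_simps)
  qed
  also have "\<dots> = (\<Sum>i\<in>UNIV. (u i - \<pi> i) * l i) + 2*\<eta>/(1-\<eta>)"
    using assms(4,7) by simp
  finally have E: "(\<Sum>i\<in>UNIV. \<Sum>a\<in>UNIV. \<pi> a * T a i)
      = (\<Sum>i\<in>UNIV. (u i - \<pi> i) * l i) + 2*\<eta>/(1-\<eta>)" .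
  have "(\<Sum>i\<in>UNIV. (\<pi> i - u i) * l i) + (\<Sum>i\<in>UNIV. (u i - \<pi> i) * l i) = 0"
    by (simp add: sum.distrib[symmetric] algebra_simps)
  then show ?thesis using B2 E by simp
qed

end
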